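(* Let $(\xi_i)_{i\ge1}$ be the points of a Poisson process of rate $1$ on $(0,\infty)$. The set of all probability measures on $[0,\infty)$ solving $$X\stackrel d=\sup_{i\ge1}e^{-\xi_i}X_i,$$ where $X_1,X_2,\dots$ are i.i.d. copies of $X$ independent of $(\xi_i)$, is exactly $\{\delta_0\}\cup\{\mathrm{law}(X_a):a>0\}$, where $P(X_a\le x)=\frac{x}{a+x}$ for $x\ge0$.
   Context: $\delta_0$ is the point mass at $0$ (the case $a=0$). *)

theory Defs
  imports "HOL-Probability.Probability"
begin

text \<open>Rate-1 Poisson process on (0,inf): its points, listed increasingly, are the partial
  sums xi_i = E_0 + ... + E_i of i.i.d. Exp(1) variables E_j.\<close>

definition base_space :: "real measure \<Rightarrow> (nat \<Rightarrow> real \<times> real) measure" where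
  "base_space \<mu> = (\<Pi>\<^sub>M i\<in>(UNIV::nat set). density lborel (exponential_density 1) \<Otimes>\<^sub>M \<mu>)"

definition pp_point :: "(nat \<Rightarrow> real \<times> real) \<Rightarrow> nat \<Rightarrow> real" where
  "pp_point \<omega> i = (\<Sum>j\<le>i. fst (\<omega> j))"

definition pp_copy :: "(nat \<Rightarrow> real \<times> real) \<Rightarrow> nat \<Rightarrow> real" where
  "pp_copy \<omega> i = snd (\<omega> i)"

text \<open>The supremum is taken in [0,inf] (ennreal), so that an a.s.-infinite value is allowed
  and simply fails to be a solution.\<close>
definition max_smoothing :: "real measure \<Rightarrow> ennreal measure" where
  "max_smoothing \<mu> = distr (base_space \<mu>) borel
     (\<lambda>\<omega>. SUP i. ennreal (exp (- pp_point \<omega> i)) * ennreal (pp_copy \<omega> i))"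

definition is_fixed_point :: "real measure \<Rightarrow> bool" where
  "is_fixed_point \<mu> \<longleftrightarrow> max_smoothing \<mu> = distr \<mu> borel ennreal"

end

theory Submission
  imports Defs
begin


lemma enn_mult_le:
  fixes c x :: real and m :: ennreal
  assumes "0 < c" "0 \<le> x"
  shows "ennreal c * m \<le> ennreal x \<longleftrightarrow> m \<le> ennreal (x / c)"
proof (cases m)
  case (real r)
  then show ?thesis using assms
    by (simp add: ennreal_mult''[symmetric] le_divide_eq mult.commute)
next
  case top
  then show ?thesis using assms by (simp add: ennreal_mult_top top_unique)
qed

locale fpset =
  fixes \<mu> :: "real measure"
  assumes P: "prob_space \<mu>" and S: "sets \<mu> = sets borel" and NN: "AE x in \<mu>. 0 \<le> x"
begin

abbreviation "M0 \<equiv> density lborel (exponential_density (1::real))"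
abbreviation "M1 \<equiv> M0 \<Otimes>\<^sub>M \<mu>"
abbreviation "B \<equiv> base_space \<mu>"

lemma P0: "prob_space M0" by (rule prob_space_exponential_density) simp
lemma P1: "prob_space M1" using P0 P by (simp add: prob_space_pair)

lemma SQ: "sequence_space M1"
  by (simp add: sequence_space_def product_prob_space_def product_prob_space_axioms_def
      product_sigma_finite_def P1 prob_space_imp_sigma_finite)

lemma B_eq: "B = (\<Pi>\<^sub>M i\<in>UNIV. M1)" by (simp add: base_space_def)

lemma PB: "prob_space B"
  unfolding B_eq using SQ by (simp add: prob_space_PiM P1)  

lemma space_mu: "space \<mu> = UNIV" using S sets_eq_imp_space_eq by fastforce
lemma space_B: "space B = UNIV"
  unfolding B_eq by (auto simp: space_PiM space_pair_measure space_mu PiE_def extensional_def)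

lemmas [measurable_cong] = S

lemma recur:
  fixes Z W :: "(nat \<Rightarrow> real \<times> real) \<Rightarrow> ennreal"
  assumes Zm: "Z \<in> borel_measurable B" and Wm: "W \<in> borel_measurable B"
  and W: "\<And>s \<omega>. W (case_nat s \<omega>) = ennreal (exp (- fst s)) * max (ennreal (snd s)) (Z \<omega>)"
  and x: "0 \<le> x"
  shows "emeasure B {\<omega>\<in>space B. W \<omega> \<le> ennreal x} =
    (\<integral>\<^sup>+t. emeasure \<mu> {..x * exp t} * emeasure B {\<omega>\<in>space B. Z \<omega> \<le> ennreal (x * exp t)} \<partial>M0)"
proof -
  let ?A = "{\<omega>\<in>space B. W \<omega> \<le> ennreal x}"
  let ?f = "\<lambda>(s, \<omega>::nat \<Rightarrow> real \<times> real). case_nat s \<omega>"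
  let ?H = "\<lambda>y. emeasure B {\<omega>\<in>space B. Z \<omega> \<le> ennreal y}"
  have Am: "?A \<in> sets B" using Wm by measurable
  have fm: "?f \<in> measurable (M1 \<Otimes>\<^sub>M B) B" unfolding B_eq by measurable
  have sfB: "sigma_finite_measure B" using PB prob_space_imp_sigma_finite by blast
  have sfmu: "sigma_finite_measure \<mu>" using P prob_space_imp_sigma_finite by blast
  have eqs: "emeasure B (Pair s -` (?f -` ?A \<inter> space (M1 \<Otimes>\<^sub>M B))) =
        indicator {..x * exp (fst s)} (snd s) * ?H (x * exp (fst s))" for s
  proof -
    have e: "ennreal (exp (- fst s)) * max (ennreal (snd s)) (Z \<omega>) \<le> ennreal x \<longleftrightarrow>
        snd s \<le> x * exp (fst s) \<and> Z \<omega> \<le> ennreal (x * exp (fst s))" for \<omega>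
      using x by (simp add: enn_mult_le exp_minus field_simps)
    have "Pair s -` (?f -` ?A \<inter> space (M1 \<Otimes>\<^sub>M B)) =
        (if snd s \<le> x * exp (fst s) then {\<omega>\<in>space B. Z \<omega> \<le> ennreal (x * exp (fst s))} else {})"
      by (auto simp: space_pair_measure space_B W e space_mu)
    then show ?thesis
      by (simp add: indicator_def)
  qed
  have "emeasure B ?A = emeasure (distr (M1 \<Otimes>\<^sub>M B) B ?f) ?A"
    using sequence_space.PiM_iter[OF SQ] by (simp add: B_eq)
  also have "\<dots> = emeasure (M1 \<Otimes>\<^sub>M B) (?f -` ?A \<inter> space (M1 \<Otimes>\<^sub>M B))"
    by (rule emeasure_distr[OF fm Am])
  also have "\<dots> = (\<integral>\<^sup>+s. emeasure B (Pair s -` (?f -` ?A \<inter> space (M1 \<Otimes>\<^sub>M B))) \<partial>M1)"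
    by (rule sigma_finite_measure.emeasure_pair_measure_alt[OF sfB]) (rule measurable_sets[OF fm Am])
  also have "\<dots> = (\<integral>\<^sup>+s. indicator {..x * exp (fst s)} (snd s) * ?H (x * exp (fst s)) \<partial>M1)"
    by (rule nn_integral_cong) (rule eqs)
  also have "\<dots> = (\<integral>\<^sup>+t. \<integral>\<^sup>+X. indicator {..x * exp t} X * ?H (x * exp t) \<partial>\<mu> \<partial>M0)"
  proof -
    have "(\<lambda>s. emeasure B (Pair s -` (?f -` ?A \<inter> space (M1 \<Otimes>\<^sub>M B)))) \<in> borel_measurable M1"
      by (rule sigma_finite_measure.measurable_emeasure_Pair[OF sfB]) (rule measurable_sets[OF fm Am])
    then have "(\<lambda>s. indicator {..x * exp (fst s)} (snd s) * ?H (x * exp (fst s))) \<in> borel_measurable M1"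
      by (subst (asm) eqs)
    then have m: "(\<lambda>(t,X). indicator {..x * exp t} X * ?H (x * exp t)) \<in> borel_measurable M1"
      by (simp add: split_beta')
    show ?thesis
      using sigma_finite_measure.nn_integral_fst[OF sfmu m] by (simp add: split_beta')
  qed
  also have "\<dots> = (\<integral>\<^sup>+t. emeasure \<mu> {..x * exp t} * ?H (x * exp t) \<partial>M0)"
    by (rule nn_integral_cong) (simp add: nn_integral_multc S)
  finally show ?thesis .
qed

definition "ft \<omega> i = ennreal (exp (- pp_point \<omega> i)) * ennreal (pp_copy \<omega> i)"
definition "Y \<omega> = (SUP i. ft \<omega> i)"
definition "Yn n \<omega> = (SUP i\<in>{..<n}. ft \<omega> i)"

lemma ft_meas[measurable]: "(\<lambda>\<omega>. ft \<omega> i) \<in> borel_measurable B"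
  unfolding ft_def pp_point_def pp_copy_def B_eq by measurable

lemma Y_meas: "Y \<in> borel_measurable B"
  unfolding Y_def by measurable

lemma Yn_meas: "Yn n \<in> borel_measurable B"
  unfolding Yn_def by measurable

lemma enn_mult_max: "(c::ennreal) * max a b = max (c * a) (c * b)"
proof (cases "a \<le> b")
  case True then show ?thesis by (simp add: max_absorb2 mult_left_mono)
next
  case False then show ?thesis by (simp add: max_absorb1 mult_left_mono)
qed

lemma ft_case0: "ft (case_nat s \<omega>) 0 = ennreal (exp (- fst s)) * ennreal (snd s)"
  by (simp add: ft_def pp_point_def pp_copy_def)

lemma ft_caseSuc: "ft (case_nat s \<omega>) (Suc i) = ennreal (exp (- fst s)) * ft \<omega> i"
proof -
  have "pp_point (case_nat s \<omega>) (Suc i) = fst s + pp_point \<omega> i"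
    unfolding pp_point_def by (subst sum.atMost_Suc_shift) simp
  moreover have "exp (-(fst s + pp_point \<omega> i)) = exp (- fst s) * exp (- pp_point \<omega> i)"
    by (simp add: exp_add[symmetric])
  ultimately show ?thesis
    by (simp add: ft_def pp_copy_def ennreal_mult mult.assoc)
qed

lemma SUP_nat_split: "(SUP i. g i) = max (g 0) (SUP i. g (Suc i) :: ennreal)"
  apply (rule antisym)
   apply (rule SUP_least)
  subgoal for i
  proof (cases i)
    case (Suc j)
    have "g (Suc j) \<le> (SUP i. g (Suc i))" by (rule SUP_upper) simp
    then show ?thesis using Suc by (simp add: le_max_iff_disj)
  qed simp
  by (auto intro!: SUP_least SUP_upper)

lemma Y_rec: "Y (case_nat s \<omega>) = ennreal (exp (- fst s)) * max (ennreal (snd s)) (Y \<omega>)"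
  unfolding Y_def by (subst SUP_nat_split) (simp add: ft_case0 ft_caseSuc enn_mult_max SUP_mult_left_ennreal)

lemma Yn_rec: "Yn (Suc n) (case_nat s \<omega>) = ennreal (exp (- fst s)) * max (ennreal (snd s)) (Yn n \<omega>)"
proof -
  have "{..<Suc n} = insert 0 (Suc ` {..<n})" by (rule lessThan_Suc_eq_insert_0)
  then have "Yn (Suc n) (case_nat s \<omega>) = max (ft (case_nat s \<omega>) 0) (SUP i\<in>{..<n}. ft (case_nat s \<omega>) (Suc i))"
    unfolding Yn_def by (simp add: image_image sup_max)
  also have "\<dots> = ennreal (exp (- fst s)) * max (ennreal (snd s)) (Yn n \<omega>)"
    unfolding Yn_def ft_case0 ft_caseSuc
    by (cases "n = 0") (simp_all add: enn_mult_max SUP_mult_left_ennreal[symmetric])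
  finally show ?thesis .
qed

lemma Yn0: "Yn 0 \<omega> = 0" by (simp add: Yn_def bot_ennreal)

lemma Y_SUP: "Y \<omega> = (SUP n. Yn n \<omega>)"
  unfolding Y_def Yn_def
proof (rule antisym)
  show "(SUP i. ft \<omega> i) \<le> (SUP n. SUP i\<in>{..<n}. ft \<omega> i)"
  proof (rule SUP_least)
    fix i
    have "ft \<omega> i \<le> (SUP i'\<in>{..<Suc i}. ft \<omega> i')" by (rule SUP_upper) simp
    also have "\<dots> \<le> (SUP n. SUP i\<in>{..<n}. ft \<omega> i)" by (rule SUP_upper) simp
    finally show "ft \<omega> i \<le> (SUP n. SUP i\<in>{..<n}. ft \<omega> i)" .
  qed
  show "(SUP n. SUP i\<in>{..<n}. ft \<omega> i) \<le> (SUP i. ft \<omega> i)"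
    by (intro SUP_least SUP_upper) simp
qed

lemma Yn_mono: "m \<le> n \<Longrightarrow> Yn m \<omega> \<le> Yn n \<omega>"
  unfolding Yn_def by (rule SUP_subset_mono) auto

end


context fpset begin

interpretation MU: prob_space \<mu> by (rule P)
interpretation PBI: prob_space B by (rule PB)
interpretation P0I: prob_space M0 by (rule P0)

definition "F x = measure \<mu> {..x}"
definition "G Z y = emeasure B {\<omega>\<in>space B. Z \<omega> \<le> ennreal y}"

lemma emeasure_F: "emeasure \<mu> {..x} = ennreal (F x)"
  unfolding F_def by (simp add: MU.emeasure_eq_measure)

lemma F_le1: "F x \<le> 1" unfolding F_def by simp
lemma F_nn: "0 \<le> F x" unfolding F_def by simp
lemma F_mono: "x \<le> y \<Longrightarrow> F x \<le> F y"
  unfolding F_def using S by (intro MU.finite_measure_mono) auto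

lemma G_le1: "G Z y \<le> 1"
  unfolding G_def by (rule PBI.emeasure_le_1)

lemma GY_rec: "0 \<le> x \<Longrightarrow> G Y x = (\<integral>\<^sup>+t. ennreal (F (x * exp t)) * G Y (x * exp t) \<partial>M0)"
  unfolding G_def emeasure_F[symmetric]
  by (rule recur[OF Y_meas Y_meas Y_rec])

lemma GYn_rec: "0 \<le> x \<Longrightarrow> G (Yn (Suc n)) x = (\<integral>\<^sup>+t. ennreal (F (x * exp t)) * G (Yn n) (x * exp t) \<partial>M0)"
  unfolding G_def emeasure_F[symmetric]
  by (rule recur[OF Yn_meas Yn_meas Yn_rec])

lemma GYn0: "G (Yn 0) x = 1"
  unfolding G_def Yn0 by (simp add: PBI.emeasure_space_1)

lemma lower:
  assumes A: "\<And>x. 0 \<le> x \<Longrightarrow> (\<integral>\<^sup>+t. ennreal (F (x * exp t)) * ennreal (F (x * exp t)) \<partial>M0) = ennreal (F x)"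
  and x: "0 \<le> x"
  shows "ennreal (F x) \<le> G Y x"
proof -
  have n: "\<forall>x\<ge>0. ennreal (F x) \<le> G (Yn n) x" for n
  proof (induction n)
    case 0
    then show ?case using F_le1 by (simp add: GYn0)
  next
    case (Suc n)
    show ?case
    proof (intro allI impI)
      fix x :: real assume x: "0 \<le> x"
      have "ennreal (F x) = (\<integral>\<^sup>+t. ennreal (F (x * exp t)) * ennreal (F (x * exp t)) \<partial>M0)"
        using A[OF x] by simp
      also have "\<dots> \<le> (\<integral>\<^sup>+t. ennreal (F (x * exp t)) * G (Yn n) (x * exp t) \<partial>M0)"
        using Suc x by (intro nn_integral_mono mult_left_mono) auto
      also have "\<dots> = G (Yn (Suc n)) x" using GYn_rec[OF x] by simp
      finally show "ennreal (F x) \<le> G (Yn (Suc n)) x" .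
    qed
  qed
  let ?A = "\<lambda>n. {\<omega>\<in>space B. Yn n \<omega> \<le> ennreal x}"
  have "{\<omega>\<in>space B. Y \<omega> \<le> ennreal x} = (\<Inter>n. ?A n)"
    by (auto simp: Y_SUP SUP_le_iff)
  then have "G Y x = emeasure B (\<Inter>n. ?A n)" by (simp add: G_def)
  also have "\<dots> = (INF n. emeasure B (?A n))"
  proof (rule INF_emeasure_decseq[symmetric])
    show "range ?A \<subseteq> sets B" using Yn_meas by auto
    show "decseq ?A" unfolding decseq_def using Yn_mono by (auto intro: order_trans)
    show "emeasure B (?A i) \<noteq> \<infinity>" for i
      by simp
  qed
  finally show ?thesis using n x by (auto simp: G_def intro!: INF_greatest)
qed

end


lemma w_step:
  fixes p q x y :: real
  assumes x: "0 < x" "x \<le> y" and p: "0 < p" "p \<le> q"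
  and lo: "(1 - x/y) * p\<^sup>2 \<le> p - (x/y) * q" and hi: "p - (x/y) * q \<le> (1 - x/y) * q\<^sup>2"
  shows "\<bar>(y / q - y) - (x / p - x)\<bar> \<le> (y - x) * (q - p) / p"
proof -
  define r where "r = x / y"
  have y: "0 < y" using x by simp
  have q: "0 < q" using p by simp
  have r: "0 < r" "r \<le> 1" "x = r * y" using x y by (auto simp: r_def)
  define D where "D = p - r * q"
  have eq: "(y / q - y) - (x / p - x) = (y / (p * q)) * (D - (1 - r) * p * q)"
    using p q y unfolding D_def r(3) by (simp add: field_simps)
  have up: "D - (1 - r) * p * q \<le> (1 - r) * q * (q - p)"
    using hi unfolding D_def r_def[symmetric] by (simp add: power2_eq_square algebra_simps)
  have dn: "(1 - r) * p * (p - q) \<le> D - (1 - r) * p * q"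
    using lo unfolding D_def r_def[symmetric] by (simp add: power2_eq_square algebra_simps)
  have ypq: "0 \<le> y / (p * q)" using y p q by simp
  have "(y / (p * q)) * (D - (1 - r) * p * q) \<le> (y / (p * q)) * ((1 - r) * q * (q - p))"
    by (rule mult_left_mono[OF up ypq])
  also have "\<dots> = (y - x) * (q - p) / p" using p q y r by (simp add: field_simps)
  finally have A: "(y / (p * q)) * (D - (1 - r) * p * q) \<le> (y - x) * (q - p) / p" .
  have "(y / (p * q)) * ((1 - r) * p * (p - q)) \<le> (y / (p * q)) * (D - (1 - r) * p * q)"
    by (rule mult_left_mono[OF dn ypq])
  moreover have "(y / (p * q)) * ((1 - r) * p * (p - q)) = - ((y - x) * (q - p) / q)"
    using p q y r by (simp add: field_simps)
  moreover have "(y - x) * (q - p) / q \<le> (y - x) * (q - p) / p"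
    using p q x by (intro divide_left_mono mult_nonneg_nonneg) auto
  ultimately have B: "- ((y - x) * (q - p) / p) \<le> (y / (p * q)) * (D - (1 - r) * p * q)" by linarith
  show ?thesis using A B unfolding eq by (simp add: abs_le_iff)
qed

lemma ode_analysis:
  fixes F :: "real \<Rightarrow> real"
  assumes mono: "\<And>x y. x \<le> y \<Longrightarrow> F x \<le> F y"
  and le1: "\<And>x. F x \<le> 1" and nn: "\<And>x. 0 \<le> F x"
  and unb: "\<And>x. \<exists>y\<ge>x. 0 < F y"
  and lo: "\<And>x y. 0 < x \<Longrightarrow> x \<le> y \<Longrightarrow> (1 - x/y) * (F x)\<^sup>2 \<le> F x - (x/y) * F y"
  and hi: "\<And>x y. 0 < x \<Longrightarrow> x \<le> y \<Longrightarrow> F x - (x/y) * F y \<le> (1 - x/y) * (F y)\<^sup>2"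
  shows "\<exists>a\<ge>0. \<forall>x>0. F x = x / (x + a)"
proof -
  have pos: "0 < F x" if x: "0 < x" for x
  proof (rule ccontr)
    assume "\<not> 0 < F x"
    then have F0: "F x = 0" using nn[of x] by simp
    obtain y where y: "y \<ge> x" "0 < F y" using unb by blast
    have "0 \<le> - (x/y) * F y" using lo[OF x y(1)] F0 by simp
    moreover have "0 < (x/y) * F y" using x y by simp
    ultimately show False by simp
  qed
  define w where "w x = x / F x - x" for x
  have ws: "\<bar>w y - w x\<bar> \<le> (y - x) * (F y - F x) / F x" if "0 < x" "x \<le> y" for x y
    unfolding w_def using w_step[OF that pos[OF that(1)] mono[OF that(2)] lo[OF that] hi[OF that]] .
  have tel: "\<bar>w y - w x\<bar> \<le> (y - x) / (real n * F x)" if xy: "0 < x" "x \<le> y" and n: "0 < n" for x y n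
  proof -
    define z where "z k = x + real k * (y - x) / real n" for k
    have z0: "z 0 = x" and zn: "z n = y" using n by (auto simp: z_def)
    have zx: "x \<le> z k" for k
    proof -
      have "0 \<le> real k * (y - x) / real n" using xy by (intro divide_nonneg_nonneg mult_nonneg_nonneg) auto
      then show ?thesis by (simp add: z_def)
    qed
    have zpos: "0 < z k" for k using xy zx[of k] by simp
    have zstep: "z (Suc k) - z k = (y - x) / real n" for k by (simp add: z_def add_divide_distrib[symmetric] algebra_simps)
    have "0 \<le> (y - x) / real n" using xy by simp
    then have zle: "z k \<le> z (Suc k)" for k using zstep[of k] by linarith
    have "w y - w x = (\<Sum>k<n. w (z (Suc k)) - w (z k))"
      by (subst sum_lessThan_telescope) (simp add: z0 zn)
    then have "\<bar>w y - w x\<bar> \<le> (\<Sum>k<n. \<bar>w (z (Suc k)) - w (z k)\<bar>)"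
      by (simp add: sum_abs)
    also have "\<dots> \<le> (\<Sum>k<n. ((y - x) / real n / F x) * (F (z (Suc k)) - F (z k)))"
    proof (rule sum_mono)
      fix k
      have "\<bar>w (z (Suc k)) - w (z k)\<bar> \<le> (z (Suc k) - z k) * (F (z (Suc k)) - F (z k)) / F (z k)"
        by (rule ws[OF zpos zle])
      also have "\<dots> \<le> (z (Suc k) - z k) * (F (z (Suc k)) - F (z k)) / F x"
      proof (rule divide_left_mono)
        show "F x \<le> F (z k)" by (rule mono[OF zx[of k]])
        show "0 \<le> (z (Suc k) - z k) * (F (z (Suc k)) - F (z k))"
          using zle[of k] mono[OF zle[of k]] by simp
        show "0 < F (z k) * F x" using pos[OF zpos[of k]] pos[OF xy(1)] by simp
      qed
      finally show "\<bar>w (z (Suc k)) - w (z k)\<bar> \<le> ((y - x) / real n / F x) * (F (z (Suc k)) - F (z k))"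
        by (simp add: zstep)
    qed
    also have "\<dots> = ((y - x) / real n) / F x * (\<Sum>k<n. F (z (Suc k)) - F (z k))"
      by (simp only: sum_distrib_left)
    also have "\<dots> = ((y - x) / real n) / F x * (F y - F x)"
      by (subst sum_lessThan_telescope) (simp add: z0 zn)
    also have "\<dots> \<le> ((y - x) / real n) / F x * 1"
    proof (rule mult_left_mono)
      show "F y - F x \<le> 1" using le1[of y] nn[of x] by simp
      show "0 \<le> (y - x) / real n / F x" using xy pos[OF xy(1)] by simp
    qed
    finally show ?thesis by simp
  qed
  have wc: "w y = w x" if xy: "0 < x" "x \<le> y" for x y
  proof (rule ccontr)
    assume ne: "w y \<noteq> w x"
    define d where "d = \<bar>w y - w x\<bar>"
    have d: "0 < d" using ne by (simp add: d_def)
    have Fx: "0 < F x" by (rule pos[OF xy(1)])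
    obtain n :: nat where n: "(y - x) / (d * F x) < real n" using reals_Archimedean2 by blast
    have "0 \<le> (y - x) / (d * F x)" using xy d Fx by simp
    then have npos: "0 < n" using n by (cases n) auto
    have dF: "0 < d * F x" using d Fx by simp
    have "y - x < real n * (d * F x)" using n dF by (simp add: divide_less_eq)
    then have "(y - x) / (real n * F x) < d"
      using npos Fx by (simp add: divide_less_eq mult_ac)
    with tel[OF xy npos] show False by (simp add: d_def)
  qed
  define a where "a = w 1"
  have wa: "w x = a" if "0 < x" for x
  proof (cases "x \<le> 1")
    case True then show ?thesis using wc[of x 1] that by (simp add: a_def)
  next
    case False then show ?thesis using wc[of 1 x] that by (simp add: a_def)
  qed
  have a0: "0 \<le> a" unfolding a_def w_def using pos[of 1] le1[of 1] by (simp add: field_simps)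
  show ?thesis
  proof (intro exI[of _ a] conjI allI impI a0)
    fix x :: real assume x: "0 < x"
    have "x / F x - x = a" using wa[OF x] by (simp add: w_def)
    then have "x / F x = x + a" by simp
    then have e: "x = (x + a) * F x" using pos[OF x] by (simp add: divide_eq_eq)
    have xa: "0 < x + a" using a0 x by simp
    show "F x = x / (x + a)" using e xa by (simp add: eq_divide_eq mult.commute)
  qed
qed



lemma sets_borel_atMost_enn: "sets (borel :: ennreal measure) = sigma_sets UNIV (range atMost)"
proof -
  have "sets (borel :: ennreal measure) = sigma_sets UNIV (range greaterThan)"
    by (subst borel_Ioi) simp
  also have "\<dots> = sigma_sets UNIV (range atMost)"
  proof (rule sigma_sets_eqI)
    fix a :: "ennreal set" assume "a \<in> range greaterThan"
    then obtain t where "a = {t<..}" by auto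
    then have a: "a = UNIV - {..t}" by auto
    show "a \<in> sigma_sets UNIV (range atMost)"
      unfolding a by (rule sigma_sets.Compl) (rule sigma_sets.Basic, simp)
  next
    fix a :: "ennreal set" assume "a \<in> range atMost"
    then obtain t where "a = {..t}" by auto
    then have a: "a = UNIV - {t<..}" by auto
    show "a \<in> sigma_sets UNIV (range greaterThan)"
      unfolding a by (rule sigma_sets.Compl) (rule sigma_sets.Basic, simp)
  qed
  finally show ?thesis .
qed

context fpset begin

interpretation MU: prob_space \<mu> by (rule P)
interpretation PBI: prob_space B by (rule PB)
interpretation P0I: prob_space M0 by (rule P0)

lemma ms_eq: "max_smoothing \<mu> = distr B borel Y"
  unfolding max_smoothing_def Y_def[abs_def] ft_def by simp

lemma G_distr: "0 \<le> x \<Longrightarrow> emeasure (distr B borel Y) {..ennreal x} = G Y x"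
  unfolding G_def using Y_meas
  by (subst emeasure_distr) (auto intro!: arg_cong[where f="emeasure B"])

lemma F_distr: "0 \<le> x \<Longrightarrow> emeasure (distr \<mu> borel ennreal) {..ennreal x} = ennreal (F x)"
proof -
  assume x: "0 \<le> x"
  have m: "ennreal \<in> borel_measurable \<mu>" by measurable
  have "emeasure (distr \<mu> borel ennreal) {..ennreal x} = emeasure \<mu> (ennreal -` {..ennreal x} \<inter> space \<mu>)"
    by (rule emeasure_distr[OF m]) simp
  also have "ennreal -` {..ennreal x} \<inter> space \<mu> = {..x}" using x by (auto simp: space_mu)
  finally show ?thesis by (simp add: emeasure_F)
qed

lemma G_of_fp: "is_fixed_point \<mu> \<Longrightarrow> 0 \<le> x \<Longrightarrow> G Y x = ennreal (F x)"
  unfolding is_fixed_point_def ms_eq using G_distr F_distr by metis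

lemma fp_of_G:
  assumes GF: "\<And>x. 0 \<le> x \<Longrightarrow> G Y x = ennreal (F x)"
  shows "is_fixed_point \<mu>"
  unfolding is_fixed_point_def ms_eq
proof (rule measure_eqI_generator_eq[where E="range atMost" and \<Omega>=UNIV and A="\<lambda>_. UNIV"])
  show "Int_stable (range (atMost :: ennreal \<Rightarrow> _))"
    by (auto simp: Int_stable_def intro!: image_eqI[where x="min _ _"])
  show "range atMost \<subseteq> Pow (UNIV :: ennreal set)" by simp
  show "sets (distr B borel Y) = sigma_sets UNIV (range atMost)"
    by (simp add: sets_borel_atMost_enn)
  show "sets (distr \<mu> borel ennreal) = sigma_sets UNIV (range atMost)"
    by (simp add: sets_borel_atMost_enn)
  have top: "{..(top::ennreal)} = UNIV" by auto
  show "range (\<lambda>_. UNIV) \<subseteq> range (atMost :: ennreal \<Rightarrow> _)"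
    using top by (auto intro!: image_eqI[where x=top])
  show "(\<Union>i::nat. UNIV) = (UNIV :: ennreal set)" by simp
  have m: "ennreal \<in> borel_measurable \<mu>" by measurable
  show "emeasure (distr B borel Y) UNIV \<noteq> \<infinity>" for i :: nat
    using Y_meas by (simp add: emeasure_distr space_B PBI.emeasure_space_1[unfolded space_B])
  fix X assume "X \<in> range (atMost :: ennreal \<Rightarrow> _)"
  then obtain t where X: "X = {..t}" by auto
  show "emeasure (distr B borel Y) X = emeasure (distr \<mu> borel ennreal) X"
  proof (cases t rule: ennreal_cases)
    case (real r)
    then show ?thesis using X G_distr F_distr GF by simp
  next
    case top
    have "emeasure (distr B borel Y) UNIV = 1"
      using Y_meas by (simp add: emeasure_distr PBI.emeasure_space_1)
    moreover have "emeasure (distr \<mu> borel ennreal) UNIV = 1"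
      using m by (simp add: emeasure_distr MU.emeasure_space_1)
    ultimately show ?thesis using X top \<open>{..top} = UNIV\<close> by simp
  qed
qed

end


lemma nn_M0:
  fixes f :: "real \<Rightarrow> ennreal"
  assumes [measurable]: "f \<in> borel_measurable borel"
  shows "(\<integral>\<^sup>+t. f t \<partial>density lborel (exponential_density 1)) =
     (\<integral>\<^sup>+t. ennreal (exp (-t)) * f t * indicator {0..} t \<partial>lborel)"
  by (subst nn_integral_density) (auto intro!: nn_integral_cong simp: exponential_density_def indicator_def)

lemma split_exp:
  fixes h :: "real \<Rightarrow> ennreal"
  assumes [measurable]: "h \<in> borel_measurable borel" and c: "0 \<le> c"
  shows "(\<integral>\<^sup>+t. ennreal (exp (-t)) * h t * indicator {0..} t \<partial>lborel) =
    (\<integral>\<^sup>+t. ennreal (exp (-t)) * h t * indicator {0..<c} t \<partial>lborel) +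
    ennreal (exp (-c)) * (\<integral>\<^sup>+r. ennreal (exp (-r)) * h (c + r) * indicator {0..} r \<partial>lborel)"
proof -
  have "(\<integral>\<^sup>+t. ennreal (exp (-t)) * h t * indicator {0..} t \<partial>lborel) =
    (\<integral>\<^sup>+t. ennreal (exp (-t)) * h t * indicator {0..<c} t + ennreal (exp (-t)) * h t * indicator {c..} t \<partial>lborel)"
    using c by (intro nn_integral_cong) (auto simp: indicator_def)
  also have "\<dots> = (\<integral>\<^sup>+t. ennreal (exp (-t)) * h t * indicator {0..<c} t \<partial>lborel) +
      (\<integral>\<^sup>+t. ennreal (exp (-t)) * h t * indicator {c..} t \<partial>lborel)"
    by (rule nn_integral_add) auto
  also have "(\<integral>\<^sup>+t. ennreal (exp (-t)) * h t * indicator {c..} t \<partial>lborel) =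
      (\<integral>\<^sup>+r. ennreal (exp (-(c + 1 * r))) * h (c + 1 * r) * indicator {c..} (c + 1 * r) \<partial>lborel)"
    using nn_integral_real_affine[of "\<lambda>t. ennreal (exp (-t)) * h t * indicator {c..} t" 1 c] by simp
  also have "\<dots> = (\<integral>\<^sup>+r. ennreal (exp (-c)) * (ennreal (exp (-r)) * h (c + r) * indicator {0..} r) \<partial>lborel)"
    by (intro nn_integral_cong) (simp add: exp_diff exp_minus ennreal_mult[symmetric] field_simps indicator_def mult.assoc
        ennreal_mult' exp_add)
  also have "\<dots> = ennreal (exp (-c)) * (\<integral>\<^sup>+r. ennreal (exp (-r)) * h (c + r) * indicator {0..} r \<partial>lborel)"
    by (rule nn_integral_cmult) auto
  finally show ?thesis .
qed

lemma int_exp2: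
  "(\<integral>\<^sup>+t. ennreal (exp (-t)) * ennreal (exp (-t)) * indicator {0..} t \<partial>lborel) = ennreal (1/2)"
proof -
  have "(\<integral>\<^sup>+t. ennreal (exp (-t)) * ennreal (exp (-t)) * indicator {0..} t \<partial>lborel) =
        (\<integral>\<^sup>+t. ennreal (exp (-2*t)) * indicator {0..} t \<partial>lborel)"
    by (intro nn_integral_cong) (simp add: ennreal_mult[symmetric] exp_add[symmetric])
  also have "\<dots> = ennreal (0 - (- (1/2) / exp (2 * 0)))"
  proof (rule nn_integral_FTC_atLeast)
    show "(\<lambda>t::real. exp (-2*t)) \<in> borel_measurable borel" by measurable
    show "((\<lambda>t. - (1/2) / exp (2 * t)) has_real_derivative exp (-2*t)) (at t)" for t :: real
      by (auto intro!: derivative_eq_intros simp: exp_minus field_simps power2_eq_square exp_add[symmetric])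
    have "filterlim (\<lambda>t::real. 2 * t) at_top at_top"
      by (rule filterlim_tendsto_pos_mult_at_top[OF tendsto_const _ filterlim_ident]) simp
    then have "filterlim (\<lambda>t::real. exp (2 * t)) at_top at_top"
      by (rule filterlim_compose[OF exp_at_top])
    then show "((\<lambda>t::real. - (1/2) / exp (2 * t)) \<longlongrightarrow> (0::real)) at_top"
      by (intro tendsto_divide_0[OF tendsto_const] filterlim_at_top_imp_at_infinity)
  qed simp
  finally show ?thesis by simp
qed

lemma int_F2:
  fixes a x :: real
  assumes a: "0 < a" and x: "0 \<le> x"
  shows "(\<integral>\<^sup>+t. ennreal (exp (-t)) * (ennreal (x * exp t / (a + x * exp t)) * ennreal (x * exp t / (a + x * exp t))) * indicator {0..} t \<partial>lborel)
     = ennreal (x / (a + x))"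
proof -
  have pos: "0 < a + x * exp t" for t using a x by (simp add: add_pos_nonneg)
  have "(\<integral>\<^sup>+t. ennreal (exp (-t)) * (ennreal (x * exp t / (a + x * exp t)) * ennreal (x * exp t / (a + x * exp t))) * indicator {0..} t \<partial>lborel) =
        (\<integral>\<^sup>+t. ennreal (x * x * exp t / (a + x * exp t)^2) * indicator {0..} t \<partial>lborel)"
  proof (intro nn_integral_cong)
    fix t
    have "exp (-t) * ((x * exp t / (a + x * exp t)) * (x * exp t / (a + x * exp t))) = x * x * exp t / (a + x * exp t)^2"
      using pos[of t] by (simp add: field_simps power2_eq_square exp_minus)
    moreover have "0 \<le> x * exp t / (a + x * exp t)" using pos[of t] x by simp
    ultimately show "ennreal (exp (-t)) * (ennreal (x * exp t / (a + x * exp t)) * ennreal (x * exp t / (a + x * exp t))) * indicator {0..} t =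
        ennreal (x * x * exp t / (a + x * exp t)^2) * indicator {0..} t"
      by (simp add: ennreal_mult[symmetric])
  qed
  also have "\<dots> = ennreal (0 - (- x / (a + x * exp 0)))"
  proof (rule nn_integral_FTC_atLeast)
    show "(\<lambda>t. x * x * exp t / (a + x * exp t)^2) \<in> borel_measurable borel" by measurable
    show "((\<lambda>t. - x / (a + x * exp t)) has_real_derivative x * x * exp t / (a + x * exp t)^2) (at t)" for t
      using pos[of t] by (auto intro!: derivative_eq_intros simp: power2_eq_square field_simps)
    show "0 \<le> x * x * exp t / (a + x * exp t)^2" for t using x by simp
    show "((\<lambda>t. - x / (a + x * exp t)) \<longlongrightarrow> 0) at_top"
    proof (cases "x = 0")
      case True then show ?thesis by simp
    next
      case False then have "0 < x" using x by simp
      have "filterlim (\<lambda>t::real. x * exp t) at_top at_top"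
        by (rule filterlim_tendsto_pos_mult_at_top[OF tendsto_const \<open>0 < x\<close> exp_at_top])
      then have "filterlim (\<lambda>t::real. a + x * exp t) at_top at_top"
        by (rule filterlim_tendsto_add_at_top[OF tendsto_const])
      then show ?thesis
        by (intro tendsto_divide_0[OF tendsto_const] filterlim_at_top_imp_at_infinity)
    qed
  qed
  finally show ?thesis by simp
qed



context fpset begin

interpretation MU: prob_space \<mu> by (rule P)
interpretation PBI: prob_space B by (rule PB)
interpretation P0I: prob_space M0 by (rule P0)

lemma F_meas[measurable]: "F \<in> borel_measurable borel"
  by (rule borel_measurable_mono) (simp add: mono_def F_mono)

definition "Ahyp \<longleftrightarrow> (\<forall>x\<ge>0. (\<integral>\<^sup>+t. ennreal (F (x * exp t)) * ennreal (F (x * exp t)) \<partial>M0) = ennreal (F x))"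

lemma A_delta:
  assumes F1: "\<And>y. 0 \<le> y \<Longrightarrow> F y = 1"
  shows Ahyp
  unfolding Ahyp_def
proof (intro allI impI)
  fix x :: real assume x: "0 \<le> x"
  have "(\<integral>\<^sup>+t. ennreal (F (x * exp t)) * ennreal (F (x * exp t)) \<partial>M0) = (\<integral>\<^sup>+t. 1 \<partial>M0)"
    using x F1 by (intro nn_integral_cong) simp
  also have "\<dots> = 1" using P0I.emeasure_space_1 by simp
  finally show "(\<integral>\<^sup>+t. ennreal (F (x * exp t)) * ennreal (F (x * exp t)) \<partial>M0) = ennreal (F x)"
    using F1[OF x] by simp
qed

lemma A_a:
  assumes a: "0 < a" and Fa: "\<And>y. 0 \<le> y \<Longrightarrow> F y = y / (a + y)"
  shows Ahyp
  unfolding Ahyp_def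
proof (intro allI impI)
  fix x :: real assume x: "0 \<le> x"
  have "(\<integral>\<^sup>+t. ennreal (F (x * exp t)) * ennreal (F (x * exp t)) \<partial>M0) =
     (\<integral>\<^sup>+t. ennreal (exp (-t)) * (ennreal (F (x * exp t)) * ennreal (F (x * exp t))) * indicator {0..} t \<partial>lborel)"
    by (rule nn_M0) measurable
  also have "\<dots> = (\<integral>\<^sup>+t. ennreal (exp (-t)) * (ennreal (x * exp t / (a + x * exp t)) * ennreal (x * exp t / (a + x * exp t))) * indicator {0..} t \<partial>lborel)"
    using x by (intro nn_integral_cong) (simp add: Fa)
  also have "\<dots> = ennreal (x / (a + x))" by (rule int_F2[OF a x])
  finally show "(\<integral>\<^sup>+t. ennreal (F (x * exp t)) * ennreal (F (x * exp t)) \<partial>M0) = ennreal (F x)"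
    using Fa[OF x] by simp
qed

lemma int_M0_exp: "(\<integral>\<^sup>+t. ennreal (exp (-t)) \<partial>M0) = ennreal (1/2)"
  by (subst nn_M0) (simp_all add: int_exp2)

lemma upper_a:
  assumes a: "0 < a" and Fa: "\<And>y. 0 \<le> y \<Longrightarrow> F y = y / (a + y)"
  shows "0 < x \<Longrightarrow> G Y x \<le> ennreal (F x + a / (2^n * x))"
proof (induction n arbitrary: x)
  case 0
  have "a / (a + x) \<le> a / x" using a 0 by (intro divide_left_mono) auto
  moreover have "x / (a + x) + a / (a + x) = 1" using a 0 by (simp add: add_divide_distrib[symmetric] add.commute)
  ultimately have "1 \<le> F x + a / x" using Fa[of x] 0 by simp
  then have "1 \<le> ennreal (F x + a / (2^0 * x))" by simp
  then show ?case by (rule order_trans[OF G_le1])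
next
  case (Suc n)
  have x: "0 < x" by fact
  have "G Y x = (\<integral>\<^sup>+t. ennreal (F (x * exp t)) * G Y (x * exp t) \<partial>M0)"
    by (rule GY_rec) (use x in simp)
  also have "\<dots> \<le> (\<integral>\<^sup>+t. ennreal (F (x * exp t)) * ennreal (F (x * exp t)) +
      ennreal (a / (2^n * x)) * ennreal (exp (-t)) \<partial>M0)"
  proof (rule nn_integral_mono)
    fix t
    define y where "y = x * exp t"
    have y: "0 < y" using x by (simp add: y_def)
    have "ennreal (F y) * G Y y \<le> ennreal (F y) * ennreal (F y + a / (2^n * y))"
      using Suc.IH[OF y] by (rule mult_left_mono) simp
    also have "\<dots> = ennreal (F y * (F y + a / (2^n * y)))"
      using F_nn[of y] a y by (intro ennreal_mult[symmetric]) auto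
    also have "\<dots> \<le> ennreal (F y * F y + a / (2^n * x) * exp (-t))"
    proof (rule ennreal_leI)
      have h1: "F y * (a / (2^n * y)) \<le> 1 * (a / (2^n * y))"
        using F_le1[of y] a y by (intro mult_right_mono) auto
      have h2: "a / (2^n * y) = a / (2^n * x) * exp (-t)"
        by (simp add: y_def exp_minus field_simps)
      have h3: "F y * (F y + a / (2^n * y)) = F y * F y + F y * (a / (2^n * y))"
        by (simp add: distrib_left)
      show "F y * (F y + a / (2^n * y)) \<le> F y * F y + a / (2^n * x) * exp (-t)"
        using h1 h2 h3 by linarith
    qed
    also have "\<dots> = ennreal (F y) * ennreal (F y) + ennreal (a / (2^n * x)) * ennreal (exp (-t))"
    proof -
      have k: "0 \<le> a / (2^n * x)" using a x by simp
      have k2: "0 \<le> a / (2^n * x) * exp (-t)" using k by (intro mult_nonneg_nonneg) auto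
      have "ennreal (F y * F y + a / (2^n * x) * exp (-t)) = ennreal (F y * F y) + ennreal (a / (2^n * x) * exp (-t))"
        using F_nn[of y] k2 by (intro ennreal_plus) auto
      also have "\<dots> = ennreal (F y) * ennreal (F y) + ennreal (a / (2^n * x)) * ennreal (exp (-t))"
      proof -
        have "ennreal (F y * F y) = ennreal (F y) * ennreal (F y)" using F_nn[of y] by (rule ennreal_mult) (rule F_nn)
        moreover have "ennreal (a / (2^n * x) * exp (-t)) = ennreal (a / (2^n * x)) * ennreal (exp (-t))"
          using k by (rule ennreal_mult) simp
        ultimately show ?thesis by (simp only:)
      qed
      finally show ?thesis .
    qed
    finally show "ennreal (F (x * exp t)) * G Y (x * exp t) \<le>
        ennreal (F (x * exp t)) * ennreal (F (x * exp t)) + ennreal (a / (2^n * x)) * ennreal (exp (-t))"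
      by (simp add: y_def)
  qed
  also have "\<dots> = (\<integral>\<^sup>+t. ennreal (F (x * exp t)) * ennreal (F (x * exp t)) \<partial>M0) +
      ennreal (a / (2^n * x)) * (\<integral>\<^sup>+t. ennreal (exp (-t)) \<partial>M0)"
    by (subst nn_integral_add) (auto simp: nn_integral_cmult)
  also have "\<dots> = ennreal (F x) + ennreal (a / (2^n * x)) * ennreal (1/2)"
    using A_a[OF a Fa] x unfolding Ahyp_def by (simp add: int_M0_exp)
  also have "\<dots> = ennreal (F x + a / (2^Suc n * x))"
  proof -
    have k: "0 \<le> a / (2^n * x)" using a x by simp
    have "ennreal (a / (2^n * x)) * ennreal (1/2) = ennreal (a / (2^n * x) * (1/2))"
      using k by (intro ennreal_mult[symmetric]) auto
    also have "a / (2^n * x) * (1/2) = a / (2^Suc n * x)" by simp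
    finally have "ennreal (a / (2^n * x)) * ennreal (1/2) = ennreal (a / (2^Suc n * x))" .
    moreover have "ennreal (F x + a / (2^Suc n * x)) = ennreal (F x) + ennreal (a / (2^Suc n * x))"
      using F_nn[of x] a x by (intro ennreal_plus) auto
    ultimately show ?thesis by simp
  qed
  finally show ?case .
qed

lemma G_le_F_a:
  assumes a: "0 < a" and Fa: "\<And>y. 0 \<le> y \<Longrightarrow> F y = y / (a + y)" and x: "0 < x"
  shows "G Y x \<le> ennreal (F x)"
proof (rule ennreal_le_epsilon)
  fix e :: real assume e: "0 < e"
  obtain n :: nat where n: "a / (x * e) < 2 ^ n" using real_arch_pow[of 2 "a / (x * e)"] by auto
  have xe: "0 < x * e" using x e by simp
  have "a < 2 ^ n * (x * e)" using n pos_divide_less_eq[OF xe] by blast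
  moreover have "(2::real) ^ n * (x * e) = e * (2 ^ n * x)" by (simp only: mult.assoc mult.commute mult.left_commute)
  ultimately have ae: "a < e * (2 ^ n * x)" by simp
  have "0 < (2::real) ^ n * x" using x by simp
  then have "a / (2^n * x) < e" using ae pos_divide_less_eq by blast
  then have "ennreal (F x + a / (2^n * x)) \<le> ennreal (F x + e)" by (intro ennreal_leI) simp
  then have "G Y x \<le> ennreal (F x + e)"
    using upper_a[OF a Fa x, of n] by (rule order_trans[rotated])
  then show "G Y x \<le> ennreal (F x) + ennreal e"
    using F_nn[of x] e by simp
qed

lemma G0:
  assumes F0: "F 0 = 0" shows "G Y 0 = 0"
proof -
  have "G Y 0 = (\<integral>\<^sup>+t. ennreal (F (0 * exp t)) * G Y (0 * exp t) \<partial>M0)"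
    by (rule GY_rec) simp
  also have "\<dots> = 0" using F0 by simp
  finally show ?thesis .
qed

end


context fpset begin

interpretation MU: prob_space \<mu> by (rule P)
interpretation PBI: prob_space B by (rule PB)
interpretation P0I: prob_space M0 by (rule P0)

lemma Q:
  assumes fp: "is_fixed_point \<mu>" and x: "0 < x" and xy: "x \<le> y"
  shows "(1 - x/y) * (F x)\<^sup>2 \<le> F x - (x/y) * F y \<and> F x - (x/y) * F y \<le> (1 - x/y) * (F y)\<^sup>2"
proof -
  have y: "0 < y" using x xy by simp
  define h where "h z t = ennreal (F (z * exp t)) * ennreal (F (z * exp t))" for z t
  have hm[measurable]: "h z \<in> borel_measurable borel" for z unfolding h_def by measurable
  have Phi: "ennreal (F z) = (\<integral>\<^sup>+t. ennreal (exp (-t)) * h z t * indicator {0..} t \<partial>lborel)" if z: "0 \<le> z" for z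
  proof -
    have "ennreal (F z) = G Y z" using G_of_fp[OF fp z] by simp
    also have "\<dots> = (\<integral>\<^sup>+t. ennreal (F (z * exp t)) * G Y (z * exp t) \<partial>M0)"
      by (rule GY_rec[OF z])
    also have "\<dots> = (\<integral>\<^sup>+t. h z t \<partial>M0)"
      unfolding h_def using z by (intro nn_integral_cong) (simp add: G_of_fp[OF fp])
    also have "\<dots> = (\<integral>\<^sup>+t. ennreal (exp (-t)) * h z t * indicator {0..} t \<partial>lborel)"
      by (rule nn_M0) simp
    finally show ?thesis .
  qed
  define c where "c = ln (y / x)"
  have c: "0 \<le> c" using x xy by (simp add: c_def)
  have ec: "exp c = y / x" using x y by (simp add: c_def)
  have emc: "exp (-c) = x / y" using ec x y by (simp add: exp_minus)
  have xc: "x * exp c = y" using ec x by simp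
  have hxy: "h x (c + r) = h y r" for r
  proof -
    have "x * exp (c + r) = (x * exp c) * exp r" by (simp add: exp_add mult.assoc)
    then have "x * exp (c + r) = y * exp r" using xc by simp
    then show ?thesis unfolding h_def by simp
  qed
  define J where "J = (\<integral>\<^sup>+t. ennreal (exp (-t)) * h x t * indicator {0..<c} t \<partial>lborel)"
  define L where "L = (\<integral>\<^sup>+t. ennreal (exp (-t)) * 1 * indicator {0..<c} t \<partial>lborel)"
  have E1: "ennreal (F x) = J + ennreal (x / y) * ennreal (F y)"
  proof -
    have "ennreal (F x) = (\<integral>\<^sup>+t. ennreal (exp (-t)) * h x t * indicator {0..} t \<partial>lborel)"
      using Phi[of x] x by simp
    also have "\<dots> = J + ennreal (exp (-c)) * (\<integral>\<^sup>+r. ennreal (exp (-r)) * h x (c + r) * indicator {0..} r \<partial>lborel)"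
      unfolding J_def by (rule split_exp[OF hm c])
    also have "(\<integral>\<^sup>+r. ennreal (exp (-r)) * h x (c + r) * indicator {0..} r \<partial>lborel) =
        (\<integral>\<^sup>+r. ennreal (exp (-r)) * h y r * indicator {0..} r \<partial>lborel)"
      by (simp only: hxy)
    also have "\<dots> = ennreal (F y)" using Phi[of y] y by simp
    finally show ?thesis unfolding emc .
  qed
  have one: "(\<integral>\<^sup>+t. ennreal (exp (-t)) * 1 * indicator {0..} t \<partial>lborel) = 1"
  proof -
    have "(\<integral>\<^sup>+t. ennreal (exp (-t)) * 1 * indicator {0..} t \<partial>lborel) = (\<integral>\<^sup>+t. 1 \<partial>M0)"
      by (rule nn_M0[symmetric]) simp
    also have "\<dots> = 1" using P0I.emeasure_space_1 by simp
    finally show ?thesis .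
  qed
  have E2: "1 = L + ennreal (x / y)"
    using split_exp[of "\<lambda>_. 1" c] c one unfolding L_def emc by simp
  have Jlo: "ennreal (F x * F x) * L \<le> J"
  proof -
    have "ennreal (F x * F x) * L = (\<integral>\<^sup>+t. ennreal (F x * F x) * (ennreal (exp (-t)) * 1 * indicator {0..<c} t) \<partial>lborel)"
      unfolding L_def by (rule nn_integral_cmult[symmetric]) measurable
    also have "\<dots> \<le> J" unfolding J_def
    proof (rule nn_integral_mono)
      fix t
      show "ennreal (F x * F x) * (ennreal (exp (-t)) * 1 * indicator {0..<c} t) \<le> ennreal (exp (-t)) * h x t * indicator {0..<c} t"
      proof (cases "t \<in> {0..<c}")
        case True
        then have "x \<le> x * exp t" using x by simp
        then have "F x \<le> F (x * exp t)" by (rule F_mono)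
        then have "F x * F x \<le> F (x * exp t) * F (x * exp t)" using F_nn[of x] by (intro mult_mono) auto
        then have le: "ennreal (F x * F x) \<le> h x t"
          unfolding h_def using F_nn[of "x * exp t"] by (simp add: ennreal_mult[symmetric])
        have "ennreal (F x * F x) * ennreal (exp (-t)) \<le> h x t * ennreal (exp (-t))"
          using le by (rule mult_right_mono) simp
        then show ?thesis using True by (simp add: mult.commute)
      qed simp
    qed
    finally show ?thesis .
  qed
  have Jhi: "J \<le> ennreal (F y * F y) * L"
  proof -
    have "J \<le> (\<integral>\<^sup>+t. ennreal (F y * F y) * (ennreal (exp (-t)) * 1 * indicator {0..<c} t) \<partial>lborel)"
      unfolding J_def
    proof (rule nn_integral_mono)
      fix t
      show "ennreal (exp (-t)) * h x t * indicator {0..<c} t \<le> ennreal (F y * F y) * (ennreal (exp (-t)) * 1 * indicator {0..<c} t)"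
      proof (cases "t \<in> {0..<c}")
        case True
        then have "x * exp t \<le> x * exp c" using x by simp
        then have "x * exp t \<le> y" using ec x by simp
        then have "F (x * exp t) \<le> F y" by (rule F_mono)
        then have "F (x * exp t) * F (x * exp t) \<le> F y * F y" using F_nn[of "x * exp t"] by (intro mult_mono) auto
        then have le: "h x t \<le> ennreal (F y * F y)"
          unfolding h_def using F_nn[of "x * exp t"] by (simp add: ennreal_mult[symmetric])
        have "h x t * ennreal (exp (-t)) \<le> ennreal (F y * F y) * ennreal (exp (-t))"
          using le by (rule mult_right_mono) simp
        then show ?thesis using True by (simp add: mult.commute)
      qed simp
    qed
    also have "\<dots> = ennreal (F y * F y) * L"
      unfolding L_def by (rule nn_integral_cmult) measurable
    finally show ?thesis .
  qed
  have "L \<noteq> top" using E2 by (metis ennreal_add_eq_top ennreal_one_neq_top)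
  then obtain l where l: "L = ennreal l" "0 \<le> l" by (cases L rule: ennreal_cases) auto
  have "J \<noteq> top" using E1 by (metis ennreal_add_eq_top ennreal_neq_top)
  then obtain j where j: "J = ennreal j" "0 \<le> j" by (cases J rule: ennreal_cases) auto
  have xy0: "0 \<le> x / y" using x y by simp
  have "ennreal 1 = ennreal (l + x / y)" using E2 l xy0 by simp
  then have l1: "l = 1 - x / y" using l xy0 by (subst (asm) ennreal_inj) auto
  have m: "ennreal (x / y * F y) = ennreal (x / y) * ennreal (F y)"
    by (rule ennreal_mult) (use xy0 F_nn in auto)
  have xyF: "0 \<le> x / y * F y" using xy0 F_nn[of y] by (rule mult_nonneg_nonneg)
  have p: "ennreal (j + x / y * F y) = ennreal j + ennreal (x / y * F y)"
    by (rule ennreal_plus) (use j xyF in auto)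
  have "ennreal (F x) = ennreal (j + x / y * F y)" using E1 unfolding j(1) p m .
  then have "F x = j + x / y * F y" using j(2) xyF F_nn[of x] by (subst (asm) ennreal_inj) auto
  then have j1: "j = F x - x / y * F y" by simp
  have m1: "ennreal (F x * F x * l) = ennreal (F x * F x) * ennreal l"
    by (rule ennreal_mult) (use l F_nn in auto)
  have "ennreal (F x * F x * l) \<le> ennreal j" using Jlo unfolding j(1) l(1) m1 .
  then have lo: "F x * F x * l \<le> j" using j by simp
  have m2: "ennreal (F y * F y * l) = ennreal (F y * F y) * ennreal l"
    by (rule ennreal_mult) (use l F_nn in auto)
  have "ennreal j \<le> ennreal (F y * F y * l)" using Jhi unfolding j(1) l(1) m2 .
  then have hi: "j \<le> F y * F y * l" using l F_nn[of y] by simp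
  show ?thesis using lo hi unfolding l1 j1 by (simp add: power2_eq_square mult_ac)
qed

end


context fpset begin

interpretation MU: prob_space \<mu> by (rule P)
interpretation PBI: prob_space B by (rule PB)
interpretation P0I: prob_space M0 by (rule P0)

lemma unb: "\<exists>y\<ge>x. 0 < F y"
proof (rule ccontr)
  assume nex: "\<not> (\<exists>y\<ge>x. 0 < F y)"
  have z: "F y = 0" if "y \<ge> x" for y
  proof -
    have "\<not> 0 < F y" using that nex by blast
    then show ?thesis using F_nn[of y] by linarith
  qed
  have U0: "emeasure \<mu> (\<Union>n::nat. {..x + real n}) = 0"
  proof (rule emeasure_UN_eq_0)
    fix n :: nat
    have "F (x + real n) = 0" by (rule z) simp
    then show "emeasure \<mu> {..x + real n} = 0" by (simp add: emeasure_F)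
  next
    show "range (\<lambda>n::nat. {..x + real n}) \<subseteq> sets \<mu>" unfolding S by (intro image_subsetI atMost_borel)
  qed
  have "(\<Union>n::nat. {..x + real n}) = UNIV"
  proof (intro set_eqI iffI)
    fix z :: real
    obtain n :: nat where "z - x \<le> real n" using real_arch_simple[of "z - x"] by blast
    then have "z \<in> {..x + real n}" by simp
    then show "z \<in> (\<Union>n::nat. {..x + real n})" by blast
  qed simp
  then have "emeasure \<mu> UNIV = 0" using U0 by simp
  moreover have "emeasure \<mu> UNIV = 1" using MU.emeasure_space_1 by (simp add: space_mu)
  ultimately show False by simp
qed

lemma fwd:
  assumes fp: "is_fixed_point \<mu>"
  shows "\<mu> = return borel 0 \<or> (\<exists>a>0. \<forall>x\<ge>0. measure \<mu> {..x} = x / (a + x))"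
proof -
  have ex: "\<exists>a\<ge>0. \<forall>x>0. F x = x / (x + a)"
    by (rule ode_analysis[of F, OF F_mono F_le1 F_nn unb Q[OF fp, THEN conjunct1] Q[OF fp, THEN conjunct2]])
  then obtain a where a: "0 \<le> a" and Fa: "\<And>x. 0 < x \<Longrightarrow> F x = x / (x + a)"
    by blast
  show ?thesis
  proof (cases "a = 0")
    case True
    then have F1: "F x = 1" if "0 < x" for x using Fa[OF that] that by simp
    have AEn: "AE z in \<mu>. z \<le> inverse (real (Suc n))" for n
    proof (rule AE_I[where N="{inverse (real (Suc n))<..}"])
      show "{z \<in> space \<mu>. \<not> z \<le> inverse (real (Suc n))} \<subseteq> {inverse (real (Suc n))<..}" by auto
      show "{inverse (real (Suc n))<..} \<in> sets \<mu>" unfolding S by (rule greaterThan_borel)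
      have "space \<mu> - {..inverse (real (Suc n))} = {inverse (real (Suc n))<..}"
        by (auto simp: space_mu)
      then have "measure \<mu> {inverse (real (Suc n))<..} = 1 - F (inverse (real (Suc n)))"
        using MU.prob_compl[of "{..inverse (real (Suc n))}", OF atMost_borel[of "inverse (real (Suc n))", folded S]]
        unfolding F_def by simp
      also have "\<dots> = 0" using F1[of "inverse (real (Suc n))"] by simp
      finally show "emeasure \<mu> {inverse (real (Suc n))<..} = 0"
        by (simp add: MU.emeasure_eq_measure)
    qed
    have AE0: "AE z in \<mu>. z = 0"
    proof -
      have "AE z in \<mu>. \<forall>n. z \<le> inverse (real (Suc n))" using AEn by (simp add: AE_all_countable)
      then show ?thesis using NN
      proof eventually_elim
        case (elim z)
        show "z = 0"
        proof (rule ccontr)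
          assume "z \<noteq> 0"
          then have "0 < z" using elim by simp
          then obtain n where "inverse (real (Suc n)) < z" using reals_Archimedean by blast
          then show False using elim by (meson not_le)
        qed
      qed
    qed
    have "\<mu> = return borel 0"
    proof (rule measure_eqI)
      show "sets \<mu> = sets (return borel 0)" unfolding sets_return by (rule S)
      fix A assume A: "A \<in> sets \<mu>"
      then have Ab: "A \<in> sets borel" unfolding S .
      show "emeasure \<mu> A = emeasure (return borel 0) A"
      proof (cases "(0::real) \<in> A")
        case True
        have "AE z in \<mu>. z \<in> A \<longleftrightarrow> z \<in> space \<mu>"
          using AE0 by eventually_elim (use True in \<open>simp add: space_mu\<close>)
        then have "emeasure \<mu> A = emeasure \<mu> (space \<mu>)"
          using A by (intro emeasure_eq_AE) auto
        then show ?thesis using True Ab MU.emeasure_space_1 by simp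
      next
        case False
        have "AE z in \<mu>. z \<in> A \<longleftrightarrow> z \<in> {}"
          using AE0 by eventually_elim (use False in simp)
        then have "emeasure \<mu> A = emeasure \<mu> {}"
          using A by (intro emeasure_eq_AE) auto
        then show ?thesis using False Ab by simp
      qed
    qed
    then show ?thesis by simp
  next
    case False
    then have apos: "0 < a" using a by simp
    have "\<forall>x\<ge>0. measure \<mu> {..x} = x / (a + x)"
    proof (intro allI impI)
      fix x :: real assume x: "0 \<le> x"
      show "measure \<mu> {..x} = x / (a + x)"
      proof (cases "x = 0")
        case False
        then show ?thesis using Fa[of x] x by (simp add: F_def add.commute)
      next
        case True
        have "F 0 \<le> 0"
        proof (rule field_le_epsilon)
          fix e :: real assume e: "0 < e"
          have "F 0 \<le> F (e * a)" using e apos by (intro F_mono) simp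
          also have "\<dots> = e * a / (e * a + a)" using Fa[of "e * a"] e apos by simp
          also have "e * a + a = (e + 1) * a" by (simp add: algebra_simps)
          also have "e * a / ((e + 1) * a) = e / (e + 1)"
            using apos by (rule nonzero_mult_divide_mult_cancel_right[OF less_imp_neq[symmetric]])
          also have "\<dots> \<le> e" using e by (simp add: field_simps)
          finally show "F 0 \<le> 0 + e" by simp
        qed
        then have "F 0 = 0" using F_nn[of 0] by linarith
        then show ?thesis using True unfolding F_def by simp
      qed
    qed
    then show ?thesis using apos by blast
  qed
qed

lemma bwd:
  assumes h: "\<mu> = return borel 0 \<or> (\<exists>a>0. \<forall>x\<ge>0. measure \<mu> {..x} = x / (a + x))"
  shows "is_fixed_point \<mu>"
  using h
proof
  assume mu: "\<mu> = return borel 0"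
  have F1: "F y = 1" if "0 \<le> y" for y
  proof -
    have "measure \<mu> {..y} = 1" using that by (simp add: mu measure_return)
    then show ?thesis by (simp add: F_def)
  qed
  have "G Y x = ennreal (F x)" if x: "0 \<le> x" for x
  proof (rule antisym)
    show "G Y x \<le> ennreal (F x)" using G_le1 F1[OF x] by simp
    show "ennreal (F x) \<le> G Y x" by (rule lower[OF A_delta[OF F1, unfolded Ahyp_def, rule_format] x])
  qed
  then show ?thesis by (rule fp_of_G)
next
  assume "\<exists>a>0. \<forall>x\<ge>0. measure \<mu> {..x} = x / (a + x)"
  then obtain a where a: "0 < a" and Fa: "\<And>y. 0 \<le> y \<Longrightarrow> F y = y / (a + y)"
    by (auto simp: F_def)
  have "G Y x = ennreal (F x)" if x: "0 \<le> x" for x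
  proof (rule antisym)
    show "ennreal (F x) \<le> G Y x" by (rule lower[OF A_a[OF a Fa, unfolded Ahyp_def, rule_format] x])
    show "G Y x \<le> ennreal (F x)"
    proof (cases "x = 0")
      case True
      have "F 0 = 0" using Fa[of 0] by simp
      then show ?thesis using G0 True by simp
    next
      case False
      then show ?thesis using G_le_F_a[OF a Fa] x by simp
    qed
  qed
  then show ?thesis by (rule fp_of_G)
qed

end

theorem proposition39:
  fixes \<mu> :: "real measure"
  assumes "prob_space \<mu>" and "sets \<mu> = sets borel" and "AE x in \<mu>. 0 \<le> x"
  shows "is_fixed_point \<mu> \<longleftrightarrow>
           (\<mu> = return borel 0 \<or>
            (\<exists>a>0. \<forall>x\<ge>0. measure \<mu> {..x} = x / (a + x)))"
proof -
  interpret fpset \<mu> using assms by (rule fpset.intro)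
  show ?thesis by (rule iffI[OF fwd bwd])
qed


end
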